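(* Let $\mathbb{F}$ be a field of characteristic $0$, let $V\subseteq\{0,1\}^n\subseteq\mathbb{F}^n$, and let $\prec_{\mathrm{lex}}$ be the lexicographic order on monomials of $\mathbb{F}[x_1,\dots,x_n]$ induced by $x_1\succ\dots\succ x_n$. Then for every monomial $m=x^{\alpha}$, $R^{\prec_{\mathrm{lex}}}_{I(V)}(m)\in\mathbb{Z}[x_1,\dots,x_n]$.
   Context: $I(V)$ is the ideal of all polynomials in $\mathbb{F}[x_1,\dots,x_n]$ vanishing on every point of $V$ (the whole ring if $V=\emptyset$). In the lexicographic order, $x^{\alpha}\succ x^{\beta}$ iff the first nonzero entry of $\alpha-\beta\in\mathbb{Z}^n$ is positive. A polynomial $p$ is reducible modulo an ideal $I$ if some $q\in I$ has the same leading ($\prec$-largest) monomial as $p$; every $p$ decomposes uniquely as $p=q+r$ with $q\in I$ and $r$ a linear combination of monomials irreducible modulo $I$, and $R^{\prec}_I(p):=r$. *)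

theory Defs
  imports Complex_Main "HOL-Library.Poly_Mapping"
begin

(* Multivariate polynomials over 'a: finitely supported maps from monomials
(exponent vectors nat \<Rightarrow>\<^sub>0 nat, variable x_(i+1) is index i) to coefficients. *)

type_synonym 'a mpoly = "(nat \<Rightarrow>\<^sub>0 nat) \<Rightarrow>\<^sub>0 'a"

definition mono_in :: "nat \<Rightarrow> (nat \<Rightarrow>\<^sub>0 nat) \<Rightarrow> bool" where
  "mono_in n \<alpha> \<longleftrightarrow> Poly_Mapping.keys \<alpha> \<subseteq> {..<n}"

definition polys :: "nat \<Rightarrow> ('a::zero) mpoly set" where
  "polys n = {p. \<forall>\<alpha>\<in>Poly_Mapping.keys p. mono_in n \<alpha>}"

definition eval_mpoly :: "('a::comm_ring_1) mpoly \<Rightarrow> (nat \<Rightarrow> 'a) \<Rightarrow> 'a" where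
  "eval_mpoly p x = (\<Sum>\<beta>\<in>Poly_Mapping.keys p. Poly_Mapping.lookup p \<beta> * (\<Prod>i\<in>Poly_Mapping.keys \<beta>. x i ^ Poly_Mapping.lookup \<beta> i))"

definition cube01 :: "nat \<Rightarrow> (nat \<Rightarrow> 'a::comm_ring_1) set" where
  "cube01 n = {x. \<forall>i. x i \<in> {0, 1} \<and> (n \<le> i \<longrightarrow> x i = 0)}"

definition vanishing_ideal :: "nat \<Rightarrow> (nat \<Rightarrow> 'a::comm_ring_1) set \<Rightarrow> 'a mpoly set" where
  "vanishing_ideal n V = {p \<in> polys n. \<forall>v\<in>V. eval_mpoly p v = 0}"

definition lex_less :: "(nat \<Rightarrow>\<^sub>0 nat) \<Rightarrow> (nat \<Rightarrow>\<^sub>0 nat) \<Rightarrow> bool" where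
  "lex_less \<beta> \<alpha> \<longleftrightarrow> (\<exists>i. Poly_Mapping.lookup \<beta> i < Poly_Mapping.lookup \<alpha> i \<and> (\<forall>j<i. Poly_Mapping.lookup \<beta> j = Poly_Mapping.lookup \<alpha> j))"

definition lead_mono :: "('a::zero) mpoly \<Rightarrow> (nat \<Rightarrow>\<^sub>0 nat)" where
  "lead_mono p = (THE \<alpha>. \<alpha> \<in> Poly_Mapping.keys p \<and> (\<forall>\<beta>\<in>Poly_Mapping.keys p. \<beta> \<noteq> \<alpha> \<longrightarrow> lex_less \<beta> \<alpha>))"

definition irreducible_mono :: "nat \<Rightarrow> ('a::zero) mpoly set \<Rightarrow> (nat \<Rightarrow>\<^sub>0 nat) \<Rightarrow> bool" where
  "irreducible_mono n I \<alpha> \<longleftrightarrow> mono_in n \<alpha> \<and> \<not> (\<exists>q\<in>I. q \<noteq> 0 \<and> lead_mono q = \<alpha>)"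

definition normal_form :: "nat \<Rightarrow> ('a::ab_group_add) mpoly set \<Rightarrow> 'a mpoly \<Rightarrow> 'a mpoly" where
  "normal_form n I p = (THE r. p - r \<in> I \<and> (\<forall>\<beta>\<in>Poly_Mapping.keys r. irreducible_mono n I \<beta>))"

end

theory Submission
  imports Defs
begin


lemma lex_irrefl: "\<not> lex_less a a"
  unfolding lex_less_def by auto

lemma lex_trans: assumes "lex_less a b" "lex_less b c" shows "lex_less a c"
proof -
  obtain i where i: "Poly_Mapping.lookup a i < Poly_Mapping.lookup b i" "\<forall>j<i. Poly_Mapping.lookup a j = Poly_Mapping.lookup b j"
    using assms(1) unfolding lex_less_def by auto
  obtain k where k: "Poly_Mapping.lookup b k < Poly_Mapping.lookup c k" "\<forall>j<k. Poly_Mapping.lookup b j = Poly_Mapping.lookup c j"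
    using assms(2) unfolding lex_less_def by auto
  consider "i < k" | "i = k" | "k < i" by arith
  then show ?thesis
  proof cases
    case 1
    then have "Poly_Mapping.lookup a i < Poly_Mapping.lookup c i" "\<forall>j<i. Poly_Mapping.lookup a j = Poly_Mapping.lookup c j"
      using i k by auto
    then show ?thesis unfolding lex_less_def by blast
  next
    case 2
    then have "Poly_Mapping.lookup a i < Poly_Mapping.lookup c i" "\<forall>j<i. Poly_Mapping.lookup a j = Poly_Mapping.lookup c j"
      using i k by auto
    then show ?thesis unfolding lex_less_def by blast
  next
    case 3
    then have "Poly_Mapping.lookup a k < Poly_Mapping.lookup c k" "\<forall>j<k. Poly_Mapping.lookup a j = Poly_Mapping.lookup c j"
      using i k by auto
    then show ?thesis unfolding lex_less_def by blast
  qed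
qed

lemma lex_asym: "lex_less a b \<Longrightarrow> \<not> lex_less b a"
proof
  assume "lex_less a b" "lex_less b a"
  then have "lex_less a a" by (rule lex_trans)
  then show False using lex_irrefl by blast
qed

lemma lex_total: assumes "a \<noteq> b" shows "lex_less a b \<or> lex_less b a"
proof -
  have ex: "\<exists>i. Poly_Mapping.lookup a i \<noteq> Poly_Mapping.lookup b i"
  proof (rule ccontr)
    assume "\<not> (\<exists>i. Poly_Mapping.lookup a i \<noteq> Poly_Mapping.lookup b i)"
    then have "\<And>i. Poly_Mapping.lookup a i = Poly_Mapping.lookup b i" by blast
    then have "a = b" by (rule poly_mapping_eqI)
    then show False using assms by simp
  qed
  define i where "i = (LEAST i. Poly_Mapping.lookup a i \<noteq> Poly_Mapping.lookup b i)"
  have 1: "Poly_Mapping.lookup a i \<noteq> Poly_Mapping.lookup b i"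
    unfolding i_def using ex by (rule LeastI_ex)
  have 2: "\<forall>j<i. Poly_Mapping.lookup a j = Poly_Mapping.lookup b j"
  proof (intro allI impI)
    fix j assume "j < i"
    then show "Poly_Mapping.lookup a j = Poly_Mapping.lookup b j"
      unfolding i_def by (rule not_less_Least[THEN notnotD])
  qed
  have 3: "\<forall>j<i. Poly_Mapping.lookup b j = Poly_Mapping.lookup a j" using 2 by simp
  show ?thesis
  proof (cases "Poly_Mapping.lookup a i < Poly_Mapping.lookup b i")
    case True then show ?thesis unfolding lex_less_def using 2 by blast
  next
    case False then have "Poly_Mapping.lookup b i < Poly_Mapping.lookup a i" using 1 by simp
    then show ?thesis unfolding lex_less_def using 3 by blast
  qed
qed

lemma lex_add: assumes "lex_less a b" shows "lex_less (a + c) (b + c)"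
proof -
  obtain i where i: "Poly_Mapping.lookup a i < Poly_Mapping.lookup b i" "\<forall>j<i. Poly_Mapping.lookup a j = Poly_Mapping.lookup b j"
    using assms unfolding lex_less_def by blast
  then have "Poly_Mapping.lookup (a + c) i < Poly_Mapping.lookup (b + c) i" "\<forall>j<i. Poly_Mapping.lookup (a + c) j = Poly_Mapping.lookup (b + c) j"
    by (simp_all add: lookup_add)
  then show ?thesis unfolding lex_less_def by blast
qed

lemma finite_max_lex: "finite X \<Longrightarrow> X \<noteq> {} \<Longrightarrow> \<exists>a\<in>X. \<forall>b\<in>X. b \<noteq> a \<longrightarrow> lex_less b a"
proof (induction X rule: finite_ne_induct)
  case (singleton x) then show ?case by auto
next
  case (insert x F)
  then obtain a where a: "a \<in> F" "\<forall>b\<in>F. b \<noteq> a \<longrightarrow> lex_less b a" by auto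
  show ?case
  proof (cases "lex_less a x")
    case True
    have "\<forall>b\<in>insert x F. b \<noteq> x \<longrightarrow> lex_less b x"
    proof (intro ballI impI)
      fix b assume "b \<in> insert x F" "b \<noteq> x"
      then have "b \<in> F" by simp
      show "lex_less b x"
      proof (cases "b = a")
        case True then show ?thesis using \<open>lex_less a x\<close> by simp
      next
        case False then have "lex_less b a" using a \<open>b \<in> F\<close> by blast
        then show ?thesis using \<open>lex_less a x\<close> by (rule lex_trans)
      qed
    qed
    then show ?thesis by blast
  next
    case False
    then have "x = a \<or> lex_less x a" using lex_total by blast
    then have "\<forall>b\<in>insert x F. b \<noteq> a \<longrightarrow> lex_less b a" using a by blast
    then show ?thesis using a by blast
  qed
qed

lemma lead_mono_prop:
  assumes "q \<noteq> 0"
  shows "lead_mono q \<in> Poly_Mapping.keys q \<and> (\<forall>b\<in>Poly_Mapping.keys q. b \<noteq> lead_mono q \<longrightarrow> lex_less b (lead_mono q))"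
proof -
  have ne: "Poly_Mapping.keys q \<noteq> {}"
  proof
    assume "Poly_Mapping.keys q = {}"
    then have "\<And>k. Poly_Mapping.lookup q k = Poly_Mapping.lookup 0 k"
      by (simp add: not_in_keys_iff_lookup_eq_zero[symmetric])
    then have "q = 0" by (rule poly_mapping_eqI)
    then show False using assms by simp
  qed
  obtain a where a: "a \<in> Poly_Mapping.keys q" "\<forall>b\<in>Poly_Mapping.keys q. b \<noteq> a \<longrightarrow> lex_less b a"
    using finite_max_lex[OF finite_keys ne] by blast
  have "lead_mono q = a" unfolding lead_mono_def
  proof (rule the_equality)
    show "a \<in> Poly_Mapping.keys q \<and> (\<forall>b\<in>Poly_Mapping.keys q. b \<noteq> a \<longrightarrow> lex_less b a)" using a by blast
  next
    fix a' assume "a' \<in> Poly_Mapping.keys q \<and> (\<forall>b\<in>Poly_Mapping.keys q. b \<noteq> a' \<longrightarrow> lex_less b a')"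
    note h0 = this
    show "a' = a"
    proof (rule ccontr)
      assume "a' \<noteq> a"
      note h = h0 this
      then have "lex_less a' a" using a by blast
      moreover have "lex_less a a'" using h a by metis
      ultimately show False using lex_asym by blast
    qed
  qed
  then show ?thesis using a by simp
qed


definition mev :: "(nat \<Rightarrow>\<^sub>0 nat) \<Rightarrow> (nat \<Rightarrow> 'a::comm_ring_1) \<Rightarrow> 'a" where
  "mev \<sigma> v = (\<Prod>i\<in>Poly_Mapping.keys \<sigma>. v i ^ Poly_Mapping.lookup \<sigma> i)"

definition cubeK :: "nat set \<Rightarrow> (nat \<Rightarrow> 'a::comm_ring_1) set" where
  "cubeK K = {v. \<forall>i. v i \<in> {0, 1} \<and> (i \<notin> K \<longrightarrow> v i = 0)}"

definition lexle :: "(nat \<Rightarrow>\<^sub>0 nat) \<Rightarrow> (nat \<Rightarrow>\<^sub>0 nat) \<Rightarrow> bool" where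
  "lexle a b \<longleftrightarrow> a = b \<or> lex_less a b"

definition sh :: "nat \<Rightarrow> (nat \<Rightarrow>\<^sub>0 nat) \<Rightarrow> (nat \<Rightarrow>\<^sub>0 nat)" where
  "sh k \<sigma> = \<sigma> + Poly_Mapping.single k 1"

lemma eval_mpoly_mev: "eval_mpoly p x = (\<Sum>\<beta>\<in>Poly_Mapping.keys p. Poly_Mapping.lookup p \<beta> * mev \<beta> x)"
  unfolding eval_mpoly_def mev_def by simp

lemma eval_superset:
  assumes "finite A" "Poly_Mapping.keys p \<subseteq> A"
  shows "eval_mpoly p x = (\<Sum>\<beta>\<in>A. Poly_Mapping.lookup p \<beta> * mev \<beta> x)"
  unfolding eval_mpoly_mev
  by (rule sum.mono_neutral_left[OF assms]) (simp add: not_in_keys_iff_lookup_eq_zero)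

lemma mev_superset:
  assumes "finite F" "Poly_Mapping.keys \<sigma> \<subseteq> F"
  shows "mev \<sigma> v = (\<Prod>i\<in>F. v i ^ Poly_Mapping.lookup \<sigma> i)"
  unfolding mev_def
  by (rule prod.mono_neutral_left[OF assms]) (simp add: not_in_keys_iff_lookup_eq_zero)

lemma mev_upd:
  assumes "k \<notin> Poly_Mapping.keys \<sigma>"
  shows "mev \<sigma> (v(k := x)) = mev \<sigma> v"
  unfolding mev_def using assms by (intro prod.cong) auto

lemma lookup_sh: "Poly_Mapping.lookup (sh k \<sigma>) i = Poly_Mapping.lookup \<sigma> i + (if i = k then 1 else 0)"
  unfolding sh_def by (simp add: lookup_add lookup_single)

lemma keys_sh: "Poly_Mapping.keys (sh k \<sigma>) = insert k (Poly_Mapping.keys \<sigma>)"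
  by (auto simp: in_keys_iff lookup_sh split: if_splits)

lemma mev_sh:
  assumes "k \<notin> Poly_Mapping.keys \<sigma>"
  shows "mev (sh k \<sigma>) v = v k * mev \<sigma> v"
proof -
  have k0: "Poly_Mapping.lookup \<sigma> k = 0" using assms by (simp add: not_in_keys_iff_lookup_eq_zero)
  have "mev (sh k \<sigma>) v = (\<Prod>i\<in>insert k (Poly_Mapping.keys \<sigma>). v i ^ Poly_Mapping.lookup (sh k \<sigma>) i)"
    unfolding mev_def keys_sh ..
  also have "\<dots> = v k ^ Poly_Mapping.lookup (sh k \<sigma>) k * (\<Prod>i\<in>Poly_Mapping.keys \<sigma>. v i ^ Poly_Mapping.lookup (sh k \<sigma>) i)"
    using assms by (simp add: prod.insert)
  also have "(\<Prod>i\<in>Poly_Mapping.keys \<sigma>. v i ^ Poly_Mapping.lookup (sh k \<sigma>) i) = mev \<sigma> v"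
    unfolding mev_def using assms by (intro prod.cong) (auto simp: lookup_sh)
  finally show ?thesis by (simp add: lookup_sh k0)
qed

lemma mev_split:
  "mev \<mu> v = v k ^ Poly_Mapping.lookup \<mu> k * mev (Poly_Mapping.update k 0 \<mu>) v"
proof -
  let ?F = "insert k (Poly_Mapping.keys \<mu>)"
  have f: "finite ?F" by simp
  have "mev \<mu> v = (\<Prod>i\<in>?F. v i ^ Poly_Mapping.lookup \<mu> i)"
    by (rule mev_superset[OF f]) auto
  also have "\<dots> = v k ^ Poly_Mapping.lookup \<mu> k * (\<Prod>i\<in>?F - {k}. v i ^ Poly_Mapping.lookup \<mu> i)"
    by (rule prod.remove[OF f]) simp
  also have "(\<Prod>i\<in>?F - {k}. v i ^ Poly_Mapping.lookup \<mu> i) = (\<Prod>i\<in>?F. v i ^ Poly_Mapping.lookup (Poly_Mapping.update k 0 \<mu>) i)"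
    by (subst prod.remove[OF f, of k]) (auto simp: lookup_update intro!: prod.cong)
  also have "\<dots> = mev (Poly_Mapping.update k 0 \<mu>) v"
    by (rule mev_superset[symmetric, OF f]) (auto simp: keys_update)
  finally show ?thesis .
qed

lemma mev_ints: assumes "v \<in> cubeK K" shows "mev \<sigma> v \<in> \<int>"
proof -
  have "\<And>i. v i \<in> \<int>"
  proof -
    fix i have "v i = 0 \<or> v i = 1" using assms unfolding cubeK_def by auto
    then show "v i \<in> \<int>" by auto
  qed
  then show ?thesis unfolding mev_def by (intro Ints_prod Ints_power)
qed

lemma inj_sh: "inj (sh k)"
  unfolding sh_def by (rule injI) simp



definition comb :: "nat \<Rightarrow> ((nat \<Rightarrow>\<^sub>0 nat) \<Rightarrow> 'a) \<Rightarrow> ((nat \<Rightarrow>\<^sub>0 nat) \<Rightarrow> 'a) \<Rightarrow> (nat \<Rightarrow>\<^sub>0 nat) \<Rightarrow> 'a" where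
  "comb k ca cb \<tau> = (if \<tau> \<in> range (sh k) then ca (inv (sh k) \<tau>) else cb \<tau>)"

lemma comb_sh: "comb k ca cb (sh k \<sigma>) = ca \<sigma>"
  unfolding comb_def by (simp add: inv_f_f[OF inj_sh])

lemma comb_other: "k \<notin> Poly_Mapping.keys \<sigma> \<Longrightarrow> comb k ca cb \<sigma> = cb \<sigma>"
  unfolding comb_def by (auto simp: keys_sh)

lemma sum_split:
  assumes fin: "finite SA" "finite SB" and kA: "\<forall>\<sigma>\<in>SA. k \<notin> Poly_Mapping.keys \<sigma>"
    and kB: "\<forall>\<sigma>\<in>SB. k \<notin> Poly_Mapping.keys \<sigma>"
  shows "(\<Sum>\<tau>\<in>sh k ` SA \<union> SB. c \<tau> * mev \<tau> v) =
    v k * (\<Sum>\<sigma>\<in>SA. c (sh k \<sigma>) * mev \<sigma> (v(k:=0))) + (\<Sum>\<sigma>\<in>SB. c \<sigma> * mev \<sigma> (v(k:=0)))"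
proof -
  have disj: "sh k ` SA \<inter> SB = {}" using kB by (auto simp: keys_sh)
  have "(\<Sum>\<tau>\<in>sh k ` SA \<union> SB. c \<tau> * mev \<tau> v) = (\<Sum>\<tau>\<in>sh k ` SA. c \<tau> * mev \<tau> v) + (\<Sum>\<tau>\<in>SB. c \<tau> * mev \<tau> v)"
    by (rule sum.union_disjoint) (use fin disj in auto)
  also have "(\<Sum>\<tau>\<in>sh k ` SA. c \<tau> * mev \<tau> v) = (\<Sum>\<sigma>\<in>SA. c (sh k \<sigma>) * mev (sh k \<sigma>) v)"
    using inj_on_subset[OF inj_sh subset_UNIV] by (simp add: sum.reindex)
  also have "\<dots> = v k * (\<Sum>\<sigma>\<in>SA. c (sh k \<sigma>) * mev \<sigma> (v(k:=0)))"
    unfolding sum_distrib_left using kA by (intro sum.cong) (auto simp: mev_sh mev_upd)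
  also have "(\<Sum>\<tau>\<in>SB. c \<tau> * mev \<tau> v) = (\<Sum>\<sigma>\<in>SB. c \<sigma> * mev \<sigma> (v(k:=0)))"
    using kB by (intro sum.cong) (auto simp: mev_upd)
  finally show ?thesis .
qed

lemma sum_comb:
  assumes fin: "finite SA" "finite SB" and kA: "\<forall>\<sigma>\<in>SA. k \<notin> Poly_Mapping.keys \<sigma>"
    and kB: "\<forall>\<sigma>\<in>SB. k \<notin> Poly_Mapping.keys \<sigma>"
  shows "(\<Sum>\<tau>\<in>sh k ` SA \<union> SB. comb k ca cb \<tau> * mev \<tau> v) =
    v k * (\<Sum>\<sigma>\<in>SA. ca \<sigma> * mev \<sigma> (v(k:=0))) + (\<Sum>\<sigma>\<in>SB. cb \<sigma> * mev \<sigma> (v(k:=0)))"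
  unfolding sum_split[OF assms]
  using kB by (simp add: comb_sh comb_other)

lemma lex_below:
  assumes "Poly_Mapping.keys \<tau> \<subseteq> insert k K" "Poly_Mapping.keys \<mu> \<subseteq> insert k K" "\<forall>a\<in>K. k < a"
    and "Poly_Mapping.lookup \<tau> k < Poly_Mapping.lookup \<mu> k"
  shows "lex_less \<tau> \<mu>"
proof -
  have "\<forall>j<k. Poly_Mapping.lookup \<tau> j = Poly_Mapping.lookup \<mu> j"
  proof (intro allI impI)
    fix j assume "j < k"
    then have "j \<notin> insert k K" using assms(3) by auto
    then have "j \<notin> Poly_Mapping.keys \<tau>" "j \<notin> Poly_Mapping.keys \<mu>" using assms(1,2) by auto
    then show "Poly_Mapping.lookup \<tau> j = Poly_Mapping.lookup \<mu> j"
      by (simp add: not_in_keys_iff_lookup_eq_zero)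
  qed
  then show ?thesis unfolding lex_less_def using assms(4) by blast
qed

definition PB :: "(nat \<Rightarrow> 'a::comm_ring_1) set \<Rightarrow> (nat \<Rightarrow>\<^sub>0 nat) set \<Rightarrow> bool" where
  "PB V S \<longleftrightarrow> (\<forall>c. (\<forall>v\<in>V. (\<Sum>\<sigma>\<in>S. c \<sigma> * mev \<sigma> v) = 0) \<longrightarrow> (\<forall>\<sigma>\<in>S. c \<sigma> = 0))"

definition PC :: "(nat \<Rightarrow> 'a::comm_ring_1) set \<Rightarrow> (nat \<Rightarrow>\<^sub>0 nat) set \<Rightarrow> bool" where
  "PC V S \<longleftrightarrow> (\<forall>g. (\<forall>v\<in>V. g v \<in> \<int>) \<longrightarrow> (\<exists>c. (\<forall>\<sigma>. c \<sigma> \<in> \<int>) \<and> (\<forall>v\<in>V. (\<Sum>\<sigma>\<in>S. c \<sigma> * mev \<sigma> v) = g v)))"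

definition PA :: "nat set \<Rightarrow> (nat \<Rightarrow> 'a::comm_ring_1) set \<Rightarrow> (nat \<Rightarrow>\<^sub>0 nat) set \<Rightarrow> bool" where
  "PA K V S \<longleftrightarrow> (\<forall>\<mu>. Poly_Mapping.keys \<mu> \<subseteq> K \<longrightarrow> (\<exists>c. (\<forall>\<sigma>. c \<sigma> \<in> \<int>) \<and> (\<forall>\<sigma>\<in>S. c \<sigma> \<noteq> 0 \<longrightarrow> lexle \<sigma> \<mu>)
      \<and> (\<forall>v\<in>V. (\<Sum>\<sigma>\<in>S. c \<sigma> * mev \<sigma> v) = mev \<mu> v)))"

lemma base_case:
  fixes V :: "(nat \<Rightarrow> 'a::comm_ring_1) set"
  assumes V: "V \<subseteq> cubeK {}"
  shows "\<exists>S. finite S \<and> (\<forall>\<sigma>\<in>S. Poly_Mapping.keys \<sigma> \<subseteq> {}) \<and> PB V S \<and> PC V S \<and> PA {} V S"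
proof (cases "V = {}")
  case True
  then show ?thesis unfolding PB_def PC_def PA_def
    by (intro exI[of _ "{}"]) auto
next
  case False
  have cz: "cubeK {} = {(\<lambda>_. 0) :: nat \<Rightarrow> 'a}" by (auto simp: cubeK_def)
  have Vz: "V = {\<lambda>_. 0}" using V False unfolding cz by (auto dest: subset_singletonD)
  have m0: "mev 0 v = 1" for v :: "nat \<Rightarrow> 'a" by (simp add: mev_def)
  have "PB V {0}" unfolding PB_def Vz by (simp add: m0)
  moreover have "PC V {0}" unfolding PC_def Vz
    by (auto simp: m0 intro!: exI[of _ "\<lambda>_. g (\<lambda>_. 0)" for g])
  moreover have "PA {} V {0}" unfolding PA_def
  proof (intro allI impI)
    fix \<mu> :: "nat \<Rightarrow>\<^sub>0 nat" assume "Poly_Mapping.keys \<mu> \<subseteq> {}"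
    then have "\<mu> = 0" by (metis poly_mapping_eqI lookup_zero not_in_keys_iff_lookup_eq_zero subset_empty empty_iff)
    then show "\<exists>c. (\<forall>\<sigma>. c \<sigma> \<in> \<int>) \<and> (\<forall>\<sigma>\<in>{0}. c \<sigma> \<noteq> 0 \<longrightarrow> lexle \<sigma> \<mu>) \<and> (\<forall>v\<in>V. (\<Sum>\<sigma>\<in>{0}. c \<sigma> * mev \<sigma> v) = (mev \<mu> v :: 'a))"
      by (intro exI[of _ "\<lambda>_. 1"]) (simp add: m0 lexle_def)
  qed
  ultimately show ?thesis by (intro exI[of _ "{0}"]) simp
qed


lemma step_case:
  fixes V :: "(nat \<Rightarrow> 'a::comm_ring_1) set"
  assumes kmin: "\<forall>a\<in>K. k < a"
    and IH: "\<forall>V::(nat \<Rightarrow> 'a) set. V \<subseteq> cubeK K \<longrightarrow> (\<exists>S. finite S \<and> (\<forall>\<sigma>\<in>S. Poly_Mapping.keys \<sigma> \<subseteq> K) \<and> PB V S \<and> PC V S \<and> PA K V S)"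
    and V: "V \<subseteq> cubeK (insert k K)"
  shows "\<exists>S. finite S \<and> (\<forall>\<sigma>\<in>S. Poly_Mapping.keys \<sigma> \<subseteq> insert k K) \<and> PB V S \<and> PC V S \<and> PA (insert k K) V S"
proof -
  have kK: "k \<notin> K" using kmin by auto
  define V0 where "V0 = {v\<in>V. v k = 0}"
  define V1 where "V1 = (\<lambda>v. v(k:=0)) ` {v\<in>V. v k = 1}"
  have vk: "v k = 0 \<or> v k = 1" if "v \<in> V" for v using V that unfolding cubeK_def by blast
  have V0c: "V0 \<subseteq> cubeK K"
  proof
    fix v assume "v \<in> V0"
    then have "v \<in> cubeK (insert k K)" "v k = 0" using V unfolding V0_def by auto
    then show "v \<in> cubeK K" unfolding cubeK_def by auto
  qed
  have V1c: "V1 \<subseteq> cubeK K"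
  proof
    fix w assume "w \<in> V1"
    then obtain v where "v \<in> V" "w = v(k:=0)" unfolding V1_def by blast
    then have "v \<in> cubeK (insert k K)" using V by auto
    then show "w \<in> cubeK K" unfolding cubeK_def \<open>w = v(k:=0)\<close> by auto
  qed
  have V1D: "w k = 0 \<and> w(k:=1) \<in> V" if "w \<in> V1" for w
  proof -
    obtain v where v: "v \<in> V" "v k = 1" "w = v(k:=0)" using \<open>w \<in> V1\<close> unfolding V1_def by blast
    then have "w(k:=1) = v" by auto
    then show ?thesis using v by simp
  qed
  have V1I: "v(k:=0) \<in> V1" if "v \<in> V" "v k = 1" for v
    unfolding V1_def using that by blast
  have V0I: "v \<in> V0" if "v \<in> V" "v k = 0" for v
    unfolding V0_def using that by blast
  have V0D: "w \<in> V" if "w \<in> V0" for w using that unfolding V0_def by blast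
  have V0k: "w k = 0" if "w \<in> V0" for w using that unfolding V0_def by blast
  have "V0 \<inter> V1 \<subseteq> cubeK K" using V0c by blast
  from IH[rule_format, OF this]
  obtain SA where SA: "finite SA" "\<forall>\<sigma>\<in>SA. Poly_Mapping.keys \<sigma> \<subseteq> K" "PB (V0 \<inter> V1) SA" "PC (V0 \<inter> V1) SA" "PA K (V0 \<inter> V1) SA"
    by blast
  have "V0 \<union> V1 \<subseteq> cubeK K" using V0c V1c by blast
  from IH[rule_format, OF this]
  obtain SB where SB: "finite SB" "\<forall>\<sigma>\<in>SB. Poly_Mapping.keys \<sigma> \<subseteq> K" "PB (V0 \<union> V1) SB" "PC (V0 \<union> V1) SB" "PA K (V0 \<union> V1) SB"
    by blast
  have kA: "\<forall>\<sigma>\<in>SA. k \<notin> Poly_Mapping.keys \<sigma>" using SA(2) kK by blast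
  have kB: "\<forall>\<sigma>\<in>SB. k \<notin> Poly_Mapping.keys \<sigma>" using SB(2) kK by blast
  define S where "S = sh k ` SA \<union> SB"
  have key: "(\<Sum>\<tau>\<in>S. comb k ca cb \<tau> * mev \<tau> v) = v k * (\<Sum>\<sigma>\<in>SA. ca \<sigma> * mev \<sigma> (v(k:=0))) + (\<Sum>\<sigma>\<in>SB. cb \<sigma> * mev \<sigma> (v(k:=0)))"
    for ca cb and v :: "nat \<Rightarrow> 'a"
    unfolding S_def by (rule sum_comb[OF SA(1) SB(1) kA kB])
  have splitS: "(\<Sum>\<tau>\<in>S. c \<tau> * mev \<tau> v) = v k * (\<Sum>\<sigma>\<in>SA. c (sh k \<sigma>) * mev \<sigma> (v(k:=0))) + (\<Sum>\<sigma>\<in>SB. c \<sigma> * mev \<sigma> (v(k:=0)))"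
    for c and v :: "nat \<Rightarrow> 'a"
    unfolding S_def by (rule sum_split[OF SA(1) SB(1) kA kB])
  have upd0: "v(k:=0) = v" if "v k = 0" for v :: "nat \<Rightarrow> 'a" using that by auto
  have wV: "v(k:=0) \<in> V0 \<union> V1" if "v \<in> V" for v
    using vk[OF that] V0I[OF that] V1I[OF that] upd0 by auto
  have avalI: "(\<Sum>\<sigma>\<in>SA. ca \<sigma> * mev \<sigma> w) \<in> \<int>" if "\<forall>\<sigma>. ca \<sigma> \<in> \<int>" "w \<in> cubeK K" for ca w
    using that by (intro Ints_sum Ints_mult) (auto intro: mev_ints)
  have finS: "finite S" unfolding S_def using SA(1) SB(1) by simp
  have keysS: "\<forall>\<sigma>\<in>S. Poly_Mapping.keys \<sigma> \<subseteq> insert k K"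
  proof
    fix \<sigma> assume "\<sigma> \<in> S"
    then consider (A) \<sigma>' where "\<sigma>' \<in> SA" "\<sigma> = sh k \<sigma>'" | (B) "\<sigma> \<in> SB" unfolding S_def by blast
    then show "Poly_Mapping.keys \<sigma> \<subseteq> insert k K"
    proof cases
      case (A \<sigma>')
      then have "Poly_Mapping.keys \<sigma>' \<subseteq> K" using SA(2) by blast
      then show ?thesis using A(2) by (auto simp: keys_sh)
    next
      case B then show ?thesis using SB(2) by blast
    qed
  qed
  have PBS: "PB V S" unfolding PB_def
  proof (intro allI impI)
    fix c assume h: "\<forall>v\<in>V. (\<Sum>\<sigma>\<in>S. c \<sigma> * mev \<sigma> v) = 0"
    define a where "a w = (\<Sum>\<sigma>\<in>SA. c (sh k \<sigma>) * mev \<sigma> w)" for w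
    define b where "b w = (\<Sum>\<sigma>\<in>SB. c \<sigma> * mev \<sigma> w)" for w
    have hv: "v k * a (v(k:=0)) + b (v(k:=0)) = 0" if "v\<in>V" for v
      using h that splitS unfolding a_def b_def by metis
    have b0: "b w = 0" if "w \<in> V0" for w
      using hv[OF V0D[OF that]] V0k[OF that] upd0[of w, OF V0k[OF that]] by simp
    have ab1: "a w + b w = 0" if "w \<in> V1" for w
    proof -
      have "w(k:=1) \<in> V" "w k = 0" using V1D[OF that] by auto
      moreover have "(w(k:=1))(k:=0) = w" using \<open>w k = 0\<close> by auto
      ultimately show ?thesis using hv[of "w(k:=1)"] by simp
    qed
    have "\<forall>w\<in>V0 \<inter> V1. a w = 0" using b0 ab1 by fastforce
    then have cA: "\<forall>\<sigma>\<in>SA. c (sh k \<sigma>) = 0"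
      using SA(3)[unfolded PB_def, THEN spec[of _ "\<lambda>\<sigma>. c (sh k \<sigma>)"]] unfolding a_def by simp
    then have a0: "a w = 0" for w unfolding a_def by simp
    have "\<forall>w\<in>V0 \<union> V1. b w = 0" using b0 ab1 a0 by fastforce
    then have cB: "\<forall>\<sigma>\<in>SB. c \<sigma> = 0"
      using SB(3)[unfolded PB_def, THEN spec[of _ c]] unfolding b_def by simp
    show "\<forall>\<sigma>\<in>S. c \<sigma> = 0" unfolding S_def using cA cB by blast
  qed
  have PCS: "PC V S" unfolding PC_def
  proof (intro allI impI)
    fix g :: "(nat \<Rightarrow> 'a) \<Rightarrow> 'a" assume gi: "\<forall>v\<in>V. g v \<in> \<int>"
    define g1 where "g1 w = g (w(k:=1))" for w
    have "\<forall>w\<in>V0 \<inter> V1. g1 w - g w \<in> \<int>"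
      using gi V0D V1D unfolding g1_def by (meson Ints_diff IntD1 IntD2)
    from SA(4)[unfolded PC_def, THEN spec, THEN mp, OF this]
    obtain ca where ca: "\<forall>\<sigma>. ca \<sigma> \<in> \<int>" "\<forall>w\<in>V0 \<inter> V1. (\<Sum>\<sigma>\<in>SA. ca \<sigma> * mev \<sigma> w) = g1 w - g w"
      by blast
    define aval where "aval w = (\<Sum>\<sigma>\<in>SA. ca \<sigma> * mev \<sigma> w)" for w
    define h where "h w = (if w \<in> V0 then g w else g1 w - aval w)" for w
    have "\<forall>w\<in>V0 \<union> V1. h w \<in> \<int>"
    proof
      fix w assume w: "w \<in> V0 \<union> V1"
      show "h w \<in> \<int>"
      proof (cases "w \<in> V0")
        case True then show ?thesis unfolding h_def using gi V0D by auto
      next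
        case False
        then have "w \<in> V1" using w by auto
        then have "g1 w \<in> \<int>" "aval w \<in> \<int>" unfolding g1_def aval_def
          using gi V1D avalI[OF ca(1)] V1c by auto
        then show ?thesis unfolding h_def using False by auto
      qed
    qed
    from SB(4)[unfolded PC_def, THEN spec, THEN mp, OF this]
    obtain cb where cb: "\<forall>\<sigma>. cb \<sigma> \<in> \<int>" "\<forall>w\<in>V0 \<union> V1. (\<Sum>\<sigma>\<in>SB. cb \<sigma> * mev \<sigma> w) = h w"
      by blast
    show "\<exists>c. (\<forall>\<sigma>. c \<sigma> \<in> \<int>) \<and> (\<forall>v\<in>V. (\<Sum>\<sigma>\<in>S. c \<sigma> * mev \<sigma> v) = g v)"
    proof (intro exI[of _ "comb k ca cb"] conjI ballI allI)
      fix \<sigma> show "comb k ca cb \<sigma> \<in> \<int>" unfolding comb_def using ca(1) cb(1) by simp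
    next
      fix v assume v: "v \<in> V"
      let ?w = "v(k:=0)"
      have "(\<Sum>\<sigma>\<in>S. comb k ca cb \<sigma> * mev \<sigma> v) = v k * aval ?w + h ?w"
        unfolding key aval_def using cb(2) wV[OF v] by simp
      also have "\<dots> = g v"
      proof (cases "v k = 0")
        case True
        then have "?w = v" "v \<in> V0" using upd0 V0I v by auto
        then show ?thesis using True unfolding h_def by simp
      next
        case False
        then have vk1: "v k = 1" using vk[OF v] by simp
        then have w1: "?w \<in> V1" using V1I v by auto
        have g1w: "g1 ?w = g v" unfolding g1_def using vk1 by (simp add: fun_upd_idem)
        show ?thesis
        proof (cases "?w \<in> V0")
          case True
          then have "aval ?w = g1 ?w - g ?w" using ca(2) w1 unfolding aval_def by blast
          then show ?thesis using True vk1 g1w unfolding h_def by simp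
        next
          case False
          then show ?thesis using vk1 g1w unfolding h_def by simp
        qed
      qed
      finally show "(\<Sum>\<sigma>\<in>S. comb k ca cb \<sigma> * mev \<sigma> v) = g v" .
    qed
  qed
  have PAS: "PA (insert k K) V S" unfolding PA_def
  proof (intro allI impI)
    fix \<mu> :: "nat \<Rightarrow>\<^sub>0 nat" assume \<mu>: "Poly_Mapping.keys \<mu> \<subseteq> insert k K"
    show "\<exists>c. (\<forall>\<sigma>. c \<sigma> \<in> \<int>) \<and> (\<forall>\<sigma>\<in>S. c \<sigma> \<noteq> 0 \<longrightarrow> lexle \<sigma> \<mu>) \<and> (\<forall>v\<in>V. (\<Sum>\<sigma>\<in>S. c \<sigma> * mev \<sigma> v) = mev \<mu> v)"
    proof (cases "Poly_Mapping.lookup \<mu> k = 0")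
      case True
      then have kmu: "k \<notin> Poly_Mapping.keys \<mu>" by (simp add: not_in_keys_iff_lookup_eq_zero)
      then have "Poly_Mapping.keys \<mu> \<subseteq> K" using \<mu> by auto
      from SB(5)[unfolded PA_def, rule_format, OF this]
      obtain cb where cb: "\<forall>\<sigma>. cb \<sigma> \<in> \<int>" "\<forall>\<sigma>\<in>SB. cb \<sigma> \<noteq> 0 \<longrightarrow> lexle \<sigma> \<mu>"
        "\<forall>w\<in>V0 \<union> V1. (\<Sum>\<sigma>\<in>SB. cb \<sigma> * mev \<sigma> w) = mev \<mu> w"
        by blast
      show ?thesis
      proof (intro exI[of _ "comb k (\<lambda>_. 0) cb"] conjI ballI allI impI)
        fix \<sigma> show "comb k (\<lambda>_. 0) cb \<sigma> \<in> \<int>" unfolding comb_def using cb(1) by simp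
      next
        fix \<sigma> assume "\<sigma> \<in> S" "comb k (\<lambda>_. 0) cb \<sigma> \<noteq> 0"
        then show "lexle \<sigma> \<mu>" unfolding S_def using cb(2) kB by (auto simp: comb_sh comb_other)
      next
        fix v assume v: "v \<in> V"
        have "(\<Sum>\<sigma>\<in>S. comb k (\<lambda>_. 0) cb \<sigma> * mev \<sigma> v) = mev \<mu> (v(k:=0))"
          unfolding key using cb(3) wV[OF v] by simp
        also have "\<dots> = mev \<mu> v" using kmu by (rule mev_upd)
        finally show "(\<Sum>\<sigma>\<in>S. comb k (\<lambda>_. 0) cb \<sigma> * mev \<sigma> v) = mev \<mu> v" .
      qed
    next
      case False
      define e where "e = Poly_Mapping.lookup \<mu> k"
      have e0: "e > 0" using False unfolding e_def by simp
      define \<mu>' where "\<mu>' = Poly_Mapping.update k 0 \<mu>"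
      have kmu': "k \<notin> Poly_Mapping.keys \<mu>'" unfolding \<mu>'_def by (simp add: keys_update)
      have "Poly_Mapping.keys \<mu>' \<subseteq> K" using \<mu> unfolding \<mu>'_def by (auto simp: keys_update)
      from SA(5)[unfolded PA_def, rule_format, OF this]
      obtain ca where ca: "\<forall>\<sigma>. ca \<sigma> \<in> \<int>" "\<forall>\<sigma>\<in>SA. ca \<sigma> \<noteq> 0 \<longrightarrow> lexle \<sigma> \<mu>'"
        "\<forall>w\<in>V0 \<inter> V1. (\<Sum>\<sigma>\<in>SA. ca \<sigma> * mev \<sigma> w) = mev \<mu>' w"
        by blast
      define aval where "aval w = (\<Sum>\<sigma>\<in>SA. ca \<sigma> * mev \<sigma> w)" for w
      define h where "h w = (if w \<in> V0 then 0 else mev \<mu>' w - aval w)" for w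
      have "\<forall>w\<in>V0 \<union> V1. h w \<in> \<int>"
      proof
        fix w assume w: "w \<in> V0 \<union> V1"
        then have "w \<in> cubeK K" using V0c V1c by auto
        then have "mev \<mu>' w \<in> \<int>" "aval w \<in> \<int>" unfolding aval_def
          using avalI[OF ca(1)] mev_ints by auto
        then show "h w \<in> \<int>" unfolding h_def by auto
      qed
      from SB(4)[unfolded PC_def, THEN spec, THEN mp, OF this]
      obtain cb where cb: "\<forall>\<sigma>. cb \<sigma> \<in> \<int>" "\<forall>w\<in>V0 \<union> V1. (\<Sum>\<sigma>\<in>SB. cb \<sigma> * mev \<sigma> w) = h w"
        by blast
      show ?thesis
      proof (intro exI[of _ "comb k ca cb"] conjI ballI allI impI)
        fix \<sigma> show "comb k ca cb \<sigma> \<in> \<int>" unfolding comb_def using ca(1) cb(1) by simp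
      next
        fix \<tau> assume "\<tau> \<in> S" "comb k ca cb \<tau> \<noteq> 0"
        then consider (A) \<sigma> where "\<sigma> \<in> SA" "\<tau> = sh k \<sigma>" "ca \<sigma> \<noteq> 0" | (B) "\<tau> \<in> SB"
          unfolding S_def by (auto simp: comb_sh)
        then show "lexle \<tau> \<mu>"
        proof cases
          case (A \<sigma>)
          have ks: "Poly_Mapping.keys \<tau> \<subseteq> insert k K" using A SA(2) by (auto simp: keys_sh)
          have le: "lexle \<sigma> \<mu>'" using A ca(2) by blast
          show ?thesis
          proof (cases "e = 1")
            case True
            have l1: "Poly_Mapping.lookup \<mu> k = 1" using True unfolding e_def .
            have "\<mu> = sh k \<mu>'"
              by (rule poly_mapping_eqI) (simp add: lookup_sh \<mu>'_def lookup_update l1)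
            then show ?thesis using le unfolding lexle_def A(2) sh_def by (auto intro: lex_add)
          next
            case False
            have "Poly_Mapping.lookup \<tau> k < Poly_Mapping.lookup \<mu> k"
              using A kA False e0 unfolding e_def[symmetric] by (simp add: lookup_sh not_in_keys_iff_lookup_eq_zero)
            then show ?thesis using lex_below[OF ks \<mu> kmin] unfolding lexle_def by blast
          qed
        next
          case B
          have ks: "Poly_Mapping.keys \<tau> \<subseteq> insert k K" using B SB(2) by auto
          have "Poly_Mapping.lookup \<tau> k < Poly_Mapping.lookup \<mu> k"
            using B kB e0 unfolding e_def[symmetric] by (simp add: not_in_keys_iff_lookup_eq_zero)
          then show ?thesis using lex_below[OF ks \<mu> kmin] unfolding lexle_def by blast
        qed
      next
        fix v assume v: "v \<in> V"
        let ?w = "v(k:=0)"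
        have mm: "mev \<mu> v = v k ^ e * mev \<mu>' ?w"
          unfolding e_def \<mu>'_def mev_split[of \<mu> v k] using mev_upd kmu' \<mu>'_def by metis
        have "(\<Sum>\<sigma>\<in>S. comb k ca cb \<sigma> * mev \<sigma> v) = v k * aval ?w + h ?w"
          unfolding key aval_def using cb(2) wV[OF v] by simp
        also have "\<dots> = mev \<mu> v"
        proof (cases "v k = 0")
          case True
          then have "?w = v" "v \<in> V0" using upd0 V0I v by auto
          then show ?thesis using True e0 unfolding h_def mm by (simp add: zero_power)
        next
          case False
          then have vk1: "v k = 1" using vk[OF v] by simp
          then have w1: "?w \<in> V1" using V1I v by auto
          show ?thesis
          proof (cases "?w \<in> V0")
            case True
            then have "aval ?w = mev \<mu>' ?w" using ca(3) w1 unfolding aval_def by blast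
            then show ?thesis using True vk1 unfolding h_def mm by simp
          next
            case False
            then show ?thesis using vk1 unfolding h_def mm by simp
          qed
        qed
        finally show "(\<Sum>\<sigma>\<in>S. comb k ca cb \<sigma> * mev \<sigma> v) = mev \<mu> v" .
      qed
    qed
  qed
  show ?thesis using finS keysS PBS PCS PAS by blast
qed



lemma main_ind:
  assumes "finite K"
  shows "\<forall>V::(nat \<Rightarrow> 'a::comm_ring_1) set. V \<subseteq> cubeK K \<longrightarrow> (\<exists>S. finite S \<and> (\<forall>\<sigma>\<in>S. Poly_Mapping.keys \<sigma> \<subseteq> K) \<and> PB V S \<and> PC V S \<and> PA K V S)"
  using assms
proof (induction K rule: finite_linorder_min_induct)
  case empty
  show ?case using base_case by blast
next
  case (insert b A)
  show ?case
  proof (intro allI impI)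
    fix V :: "(nat \<Rightarrow> 'a) set" assume "V \<subseteq> cubeK (insert b A)"
    then show "\<exists>S. finite S \<and> (\<forall>\<sigma>\<in>S. Poly_Mapping.keys \<sigma> \<subseteq> insert b A) \<and> PB V S \<and> PC V S \<and> PA (insert b A) V S"
      by (rule step_case[OF insert(2) insert(3)])
  qed
qed

lemma keys_diff_sub: "Poly_Mapping.keys (a - b) \<subseteq> Poly_Mapping.keys a \<union> Poly_Mapping.keys b"
  by (auto simp: in_keys_iff lookup_minus)

lemma eval_diff: "eval_mpoly (a - b) v = eval_mpoly a v - eval_mpoly (b :: 'a::comm_ring_1 mpoly) v"
proof -
  let ?A = "Poly_Mapping.keys a \<union> Poly_Mapping.keys b"
  have f: "finite ?A" by simp
  have "eval_mpoly (a - b) v = (\<Sum>\<beta>\<in>?A. Poly_Mapping.lookup (a - b) \<beta> * mev \<beta> v)"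
    by (rule eval_superset[OF f keys_diff_sub])
  also have "\<dots> = (\<Sum>\<beta>\<in>?A. Poly_Mapping.lookup a \<beta> * mev \<beta> v) - (\<Sum>\<beta>\<in>?A. Poly_Mapping.lookup b \<beta> * mev \<beta> v)"
    by (simp add: lookup_minus left_diff_distrib sum_subtractf)
  also have "\<dots> = eval_mpoly a v - eval_mpoly b v"
    by (simp add: eval_superset[OF f, symmetric])
  finally show ?thesis .
qed

lemma ideal_diff:
  assumes "a \<in> vanishing_ideal n V" "b \<in> vanishing_ideal n V"
  shows "a - b \<in> vanishing_ideal n V"
  using assms keys_diff_sub[of a b] unfolding vanishing_ideal_def polys_def
  by (auto simp: eval_diff)

lemma eval_single: "eval_mpoly (Poly_Mapping.single \<mu> (1::'a::comm_ring_1)) v = mev \<mu> v"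
  unfolding eval_mpoly_mev by simp

theorem mainTheorem7:
  fixes V :: "(nat \<Rightarrow> 'a::field_char_0) set" and n :: nat and \<alpha> :: "nat \<Rightarrow>\<^sub>0 nat"
  assumes "V \<subseteq> cube01 n"
    and "mono_in n \<alpha>"
  shows "\<forall>\<beta>. Poly_Mapping.lookup (normal_form n (vanishing_ideal n V) (Poly_Mapping.single \<alpha> 1)) \<beta> \<in> \<int>"
proof -
  define K where "K = {..<n}"
  have cube: "cube01 n = (cubeK K :: (nat \<Rightarrow> 'a) set)" unfolding cube01_def cubeK_def K_def by auto
  have "V \<subseteq> cubeK K" using assms(1) cube by simp
  from main_ind[of K, rule_format, OF _ this]
  obtain S where S: "finite S" "\<forall>\<sigma>\<in>S. Poly_Mapping.keys \<sigma> \<subseteq> K" "PB V S" "PA K V S"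
    unfolding K_def by blast
  define I where "I = vanishing_ideal n V"
  have monoS: "mono_in n \<sigma>" if "\<sigma> \<in> S" for \<sigma> using S(2) that unfolding mono_in_def K_def by blast
  have irr: "irreducible_mono n I \<beta>" if \<beta>S: "\<beta> \<in> S" for \<beta>
    unfolding irreducible_mono_def
  proof (intro conjI notI)
    show "mono_in n \<beta>" using monoS[OF \<beta>S] .
  next
    assume "\<exists>q\<in>I. q \<noteq> 0 \<and> lead_mono q = \<beta>"
    then obtain q where q: "q \<in> I" "q \<noteq> 0" "lead_mono q = \<beta>" by blast
    have \<beta>q: "\<beta> \<in> Poly_Mapping.keys q" and lt: "\<forall>\<mu>\<in>Poly_Mapping.keys q. \<mu> \<noteq> \<beta> \<longrightarrow> lex_less \<mu> \<beta>"
      using lead_mono_prop[OF q(2)] q(3) by auto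
    have qz: "\<forall>v\<in>V. eval_mpoly q v = 0" using q(1) unfolding I_def vanishing_ideal_def by blast
    have "\<forall>\<mu>\<in>Poly_Mapping.keys q. Poly_Mapping.keys \<mu> \<subseteq> K"
      using q(1) unfolding I_def vanishing_ideal_def polys_def mono_in_def K_def by blast
    then have "\<forall>\<mu>\<in>Poly_Mapping.keys q. \<exists>c. (\<forall>\<sigma>. c \<sigma> \<in> \<int>) \<and> (\<forall>\<sigma>\<in>S. c \<sigma> \<noteq> 0 \<longrightarrow> lexle \<sigma> \<mu>) \<and> (\<forall>v\<in>V. (\<Sum>\<sigma>\<in>S. c \<sigma> * mev \<sigma> v) = mev \<mu> v)"
      using S(4) unfolding PA_def by blast
    from bchoice[OF this] obtain C where C: "\<forall>\<mu>\<in>Poly_Mapping.keys q. (\<forall>\<sigma>\<in>S. C \<mu> \<sigma> \<noteq> 0 \<longrightarrow> lexle \<sigma> \<mu>) \<and> (\<forall>v\<in>V. (\<Sum>\<sigma>\<in>S. C \<mu> \<sigma> * mev \<sigma> v) = mev \<mu> v)"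
      by blast
    define Q where "Q = Poly_Mapping.keys q - {\<beta>}"
    have finQ: "finite Q" unfolding Q_def by simp
    define d where "d \<sigma> = (if \<sigma> = \<beta> then Poly_Mapping.lookup q \<beta> else 0) + (\<Sum>\<mu>\<in>Q. Poly_Mapping.lookup q \<mu> * C \<mu> \<sigma>)" for \<sigma>
    have "\<forall>v\<in>V. (\<Sum>\<sigma>\<in>S. d \<sigma> * mev \<sigma> v) = 0"
    proof
      fix v assume v: "v \<in> V"
      have "(\<Sum>\<sigma>\<in>S. d \<sigma> * mev \<sigma> v) = (\<Sum>\<sigma>\<in>S. (if \<sigma> = \<beta> then Poly_Mapping.lookup q \<beta> * mev \<sigma> v else 0))
          + (\<Sum>\<sigma>\<in>S. \<Sum>\<mu>\<in>Q. Poly_Mapping.lookup q \<mu> * (C \<mu> \<sigma> * mev \<sigma> v))"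
        unfolding d_def by (simp add: distrib_right sum.distrib sum_distrib_right mult.assoc) (rule sum.cong, auto)
      also have "(\<Sum>\<sigma>\<in>S. (if \<sigma> = \<beta> then Poly_Mapping.lookup q \<beta> * mev \<sigma> v else 0)) = Poly_Mapping.lookup q \<beta> * mev \<beta> v"
        using \<beta>S S(1) by simp
      also have "(\<Sum>\<sigma>\<in>S. \<Sum>\<mu>\<in>Q. Poly_Mapping.lookup q \<mu> * (C \<mu> \<sigma> * mev \<sigma> v)) = (\<Sum>\<mu>\<in>Q. Poly_Mapping.lookup q \<mu> * (\<Sum>\<sigma>\<in>S. C \<mu> \<sigma> * mev \<sigma> v))"
        by (simp add: sum.swap[of _ S] sum_distrib_left)
      also have "\<dots> = (\<Sum>\<mu>\<in>Q. Poly_Mapping.lookup q \<mu> * mev \<mu> v)"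
        using C v unfolding Q_def by (intro sum.cong) auto
      also have "Poly_Mapping.lookup q \<beta> * mev \<beta> v + \<dots> = (\<Sum>\<mu>\<in>Poly_Mapping.keys q. Poly_Mapping.lookup q \<mu> * mev \<mu> v)"
        unfolding Q_def using \<beta>q by (simp add: sum.remove)
      also have "\<dots> = 0" using qz v unfolding eval_mpoly_mev by simp
      finally show "(\<Sum>\<sigma>\<in>S. d \<sigma> * mev \<sigma> v) = 0" .
    qed
    then have "d \<beta> = 0" using S(3) \<beta>S unfolding PB_def by blast
    moreover have "C \<mu> \<beta> = 0" if "\<mu> \<in> Q" for \<mu>
    proof (rule ccontr)
      assume "C \<mu> \<beta> \<noteq> 0"
      then have "lexle \<beta> \<mu>" using C \<beta>S that unfolding Q_def by blast
      moreover have "lex_less \<mu> \<beta>" "\<mu> \<noteq> \<beta>" using lt that unfolding Q_def by auto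
      ultimately show False unfolding lexle_def using lex_asym by blast
    qed
    ultimately have "Poly_Mapping.lookup q \<beta> = 0" unfolding d_def by simp
    then show False using \<beta>q by (simp add: in_keys_iff)
  qed
  have "Poly_Mapping.keys \<alpha> \<subseteq> K" using assms(2) unfolding mono_in_def K_def .
  then obtain c\<alpha> where c\<alpha>: "\<forall>\<sigma>. c\<alpha> \<sigma> \<in> \<int>" "\<forall>v\<in>V. (\<Sum>\<sigma>\<in>S. c\<alpha> \<sigma> * mev \<sigma> v) = mev \<alpha> v"
    using S(4) unfolding PA_def by blast
  define f where "f \<sigma> = (if \<sigma> \<in> S then c\<alpha> \<sigma> else 0)" for \<sigma>
  define r where "r = Abs_poly_mapping f"
  have "finite {x. f x \<noteq> 0}" using S(1) unfolding f_def by (rule rev_finite_subset) auto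
  then have lr: "Poly_Mapping.lookup r = f" unfolding r_def by simp
  have keysr: "Poly_Mapping.keys r \<subseteq> S"
  proof
    fix x assume "x \<in> Poly_Mapping.keys r"
    then have "Poly_Mapping.lookup r x \<noteq> 0" by (simp add: in_keys_iff)
    then show "x \<in> S" unfolding lr f_def by (auto split: if_splits)
  qed
  have evr: "eval_mpoly r v = mev \<alpha> v" if "v \<in> V" for v
  proof -
    have "eval_mpoly r v = (\<Sum>\<sigma>\<in>S. Poly_Mapping.lookup r \<sigma> * mev \<sigma> v)"
      by (rule eval_superset[OF S(1) keysr])
    also have "\<dots> = (\<Sum>\<sigma>\<in>S. c\<alpha> \<sigma> * mev \<sigma> v)" unfolding lr f_def by simp
    finally show ?thesis using c\<alpha>(2) that by simp
  qed
  have rint: "Poly_Mapping.lookup r \<beta> \<in> \<int>" for \<beta> unfolding lr f_def using c\<alpha>(1) by simp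
  define p where "p = Poly_Mapping.single \<alpha> (1::'a)"
  have pr: "p - r \<in> I"
  proof -
    have "\<forall>\<mu>\<in>Poly_Mapping.keys (p - r). mono_in n \<mu>"
      using keys_diff_sub[of p r] keysr monoS assms(2) unfolding p_def by auto
    moreover have "\<forall>v\<in>V. eval_mpoly (p - r) v = 0"
      using evr unfolding eval_diff p_def eval_single by simp
    ultimately show ?thesis unfolding I_def vanishing_ideal_def polys_def by blast
  qed
  have irrr: "\<forall>\<beta>\<in>Poly_Mapping.keys r. irreducible_mono n I \<beta>" using keysr irr by blast
  have NF: "normal_form n I p = r" unfolding normal_form_def
  proof (rule the_equality)
    show "p - r \<in> I \<and> (\<forall>\<beta>\<in>Poly_Mapping.keys r. irreducible_mono n I \<beta>)" using pr irrr by blast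
  next
    fix r' assume h: "p - r' \<in> I \<and> (\<forall>\<beta>\<in>Poly_Mapping.keys r'. irreducible_mono n I \<beta>)"
    show "r' = r"
    proof (rule ccontr)
      assume ne: "r' \<noteq> r"
      define d where "d = r' - r"
      have dne: "d \<noteq> 0" using ne unfolding d_def by simp
      have "d = (p - r) - (p - r')" unfolding d_def by (simp add: algebra_simps)
      then have dI: "d \<in> I" using ideal_diff pr h unfolding I_def by metis
      have "lead_mono d \<in> Poly_Mapping.keys d" using lead_mono_prop[OF dne] by blast
      then have "lead_mono d \<in> Poly_Mapping.keys r' \<union> Poly_Mapping.keys r" using keys_diff_sub[of r' r] unfolding d_def by blast
      then have "irreducible_mono n I (lead_mono d)" using h irrr by blast
      then show False using dI dne unfolding irreducible_mono_def by blast
    qed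
  qed
  show ?thesis using NF rint unfolding I_def p_def by simp
qed

end
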